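(* Let $n\geq 2$ and for $1\le i,j\le n$ let $\Omega_{ij}=E_{ij}-E_{ji}\in\mathfrak{so}(n)$, where $E_{ij}$ is the matrix with $1$ in entry $(i,j)$ and $0$ elsewhere. Given index pairs $(i_0,j_0),\dots,(i_m,j_m)$ with $i_k\neq j_k$, consider the system on $\mathbb{S}^{n-1}$ \[ \dot x(t)=\Bigl(\Omega_{i_0j_0}+\sum_{k=1}^m u_k(t)\Omega_{i_kj_k}\Bigr)x(t),\qquad x(0)\in\mathbb{S}^{n-1}. \] Let $\mathcal{G}=(\mathcal{V},\mathcal{E})$ be the graph with vertex set $\mathcal{V}=\{v_1,\dots,v_n\}$ and edge set $\mathcal{E}=\{v_{i_0}v_{j_0},\dots,v_{i_m}v_{j_m}\}$. Then the system is controllable on $\mathbb{S}^{n-1}$ if and only if $\mathcal{G}$ is connected. *)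

theory Defs
  imports "HOL-Analysis.Analysis"
begin

definition Omega :: "'n::finite \<Rightarrow> 'n \<Rightarrow> real^'n^'n" where
  "Omega i j = (\<chi> a b. (if a = i \<and> b = j then 1 else 0) - (if a = j \<and> b = i then 1 else 0))"

text \<open>Index pairs are the list ps = [(i_0,j_0),...,(i_m,j_m)], so m = length ps - 1.
  For a control value v (v k is u_k, k = 1..m) the system matrix is
  Omega_{i_0 j_0} + sum_{k=1}^m v k * Omega_{i_k j_k}.\<close>
definition sys_matrix :: "('n::finite \<times> 'n) list \<Rightarrow> (nat \<Rightarrow> real) \<Rightarrow> real^'n^'n" where
  "sys_matrix ps v = Omega (fst (ps!0)) (snd (ps!0))
     + (\<Sum>k\<in>{1..<length ps}. v k *\<^sub>R Omega (fst (ps!k)) (snd (ps!k)))"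

text \<open>Admissible controls: piecewise constant on [0,T] (locally constant off a finite set).\<close>
definition piecewise_constant_on :: "real \<Rightarrow> (real \<Rightarrow> 'a) \<Rightarrow> bool" where
  "piecewise_constant_on T u \<longleftrightarrow>
     (\<exists>S. finite S \<and> (\<forall>t\<in>{0..T} - S. eventually (\<lambda>s. u s = u t) (at t)))"

definition is_trajectory ::
  "('n::finite \<times> 'n) list \<Rightarrow> real \<Rightarrow> (real \<Rightarrow> nat \<Rightarrow> real) \<Rightarrow> (real \<Rightarrow> real^'n) \<Rightarrow> bool" where
  "is_trajectory ps T u x \<longleftrightarrow> continuous_on {0..T} x \<and>
     (\<exists>S. finite S \<and> (\<forall>t\<in>{0<..<T} - S.
        (x has_vector_derivative (sys_matrix ps (u t) *v x t)) (at t)))"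

definition reachable :: "('n::finite \<times> 'n) list \<Rightarrow> real^'n \<Rightarrow> real^'n \<Rightarrow> bool" where
  "reachable ps x0 x1 \<longleftrightarrow> (\<exists>T u x. T \<ge> 0 \<and> piecewise_constant_on T u \<and>
      is_trajectory ps T u x \<and> x 0 = x0 \<and> x T = x1)"

definition controllable_on_sphere :: "('n::finite \<times> 'n) list \<Rightarrow> bool" where
  "controllable_on_sphere ps \<longleftrightarrow>
     (\<forall>x0 x1::real^'n. norm x0 = 1 \<longrightarrow> norm x1 = 1 \<longrightarrow> reachable ps x0 x1)"

definition graph_connected :: "('n \<times> 'n) list \<Rightarrow> bool" where
  "graph_connected ps \<longleftrightarrow> (\<forall>v w. (v, w) \<in> (set ps \<union> (set ps)\<inverse>)\<^sup>*)"

end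

theory Submission
  imports Defs
begin


lemma Omega_entry: "Omega i j $ a $ b = (if a = i \<and> b = j then 1 else 0) - (if a = j \<and> b = i then 1 else 0)"
  by (simp add: Omega_def)
lemma Omega_mv: "(Omega i j *v x) $ a = (if a = i then x$j else 0) - (if a = j then x$i else 0)"
proof -
  have "(Omega i j *v x) $ a = (\<Sum>b\<in>UNIV. (if a = i \<and> b = j then 1 else 0) * x$b - (if a = j \<and> b = i then 1 else 0) * x$b)"
    by (simp add: matrix_vector_mult_def Omega_entry left_diff_distrib)
  also have "\<dots> = (\<Sum>b\<in>UNIV. (if a = i \<and> b = j then 1 else 0) * x$b) - (\<Sum>b\<in>UNIV. (if a = j \<and> b = i then 1 else 0) * x$b)"
    by (rule sum_subtractf)
  also have "(\<Sum>b\<in>UNIV. (if a = i \<and> b = j then 1 else 0) * x$b) = (if a = i then x$j else 0)"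
    by (cases "a = i") (simp_all add: if_distrib[where f="\<lambda>z. z * _"] cong: if_cong)
  also have "(\<Sum>b\<in>UNIV. (if a = j \<and> b = i then 1 else 0) * x$b) = (if a = j then x$i else 0)"
    by (cases "a = j") (simp_all add: if_distrib[where f="\<lambda>z. z * _"] cong: if_cong)
  finally show ?thesis .
qed

lemma Omega_swap: "Omega b a = - Omega a b"
  by (auto simp add: Omega_def vec_eq_iff)

lemma sys_matrix_single:
  assumes "k \<in> {1..<length ps}"
  shows "sys_matrix ps (\<lambda>j. if j = k then c else 0) =
     Omega (fst (ps!0)) (snd (ps!0)) + c *\<^sub>R Omega (fst (ps!k)) (snd (ps!k))"
proof -
  have "(\<Sum>j\<in>{1..<length ps}. (if j = k then c else 0) *\<^sub>R Omega (fst (ps!j)) (snd (ps!j)))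
     = (\<Sum>j\<in>{1..<length ps}. if j = k then c *\<^sub>R Omega (fst (ps!j)) (snd (ps!j)) else 0)"
    by (rule sum.cong) auto
  also have "\<dots> = c *\<^sub>R Omega (fst (ps!k)) (snd (ps!k))"
    using assms by simp
  finally show ?thesis by (simp add: sys_matrix_def)
qed

lemma sys_matrix_zero: "sys_matrix ps (\<lambda>j. 0) = Omega (fst (ps!0)) (snd (ps!0))"
  by (simp add: sys_matrix_def)

lemma comb3: "x + a *\<^sub>R y + b *\<^sub>R z + a' *\<^sub>R (y + a *\<^sub>R z + b *\<^sub>R (c *\<^sub>R y))
   + b' *\<^sub>R (z + a *\<^sub>R (c *\<^sub>R y) + b *\<^sub>R (c *\<^sub>R z))
   = x + (a + a' + a'*b*c + b'*a*c) *\<^sub>R y + (b + a'*a + b' + b'*b*c) *\<^sub>R (z::'a::real_vector)"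
  by (simp add: algebra_simps)

definition flowE :: "real^'n^'n \<Rightarrow> real \<Rightarrow> real \<Rightarrow> real^'n \<Rightarrow> real^'n" where
  "flowE A w t x = x + (sin (w * t)/w) *\<^sub>R (A *v x) + ((1 - cos (w * t))/w^2) *\<^sub>R (A *v (A *v x))"

lemma flow_Av:
  assumes cube: "\<And>y. A *v (A *v (A *v y)) = -(w^2) *\<^sub>R (A *v y)"
  shows "A *v flowE A w t x = A *v x + (sin (w * t)/w) *\<^sub>R (A *v (A *v x)) + ((1 - cos (w * t))/w^2) *\<^sub>R (-(w^2) *\<^sub>R (A *v x))"
  by (simp add: flowE_def matrix_vector_right_distrib matrix_vector_mult_scaleR cube)

lemma flow_deriv:
  assumes cube: "\<And>y. A *v (A *v (A *v y)) = -(w^2) *\<^sub>R (A *v y)" and w: "w > 0"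
  shows "((\<lambda>t. flowE A w t x) has_vector_derivative (A *v flowE A w t x)) (at t)"
proof -
  have "((\<lambda>t. flowE A w t x) has_vector_derivative
     (cos (w * t) *\<^sub>R (A *v x) + (sin (w * t)/w) *\<^sub>R (A *v (A *v x)))) (at t)"
  proof -
    have d1: "((\<lambda>t. sin (w * t)/w) has_real_derivative cos (w * t)) (at t)"
      using w by (auto intro!: derivative_eq_intros)
    have d2: "((\<lambda>t. (1 - cos (w * t))/w^2) has_real_derivative sin (w * t)/w) (at t)"
      using w by (auto intro!: derivative_eq_intros simp: power2_eq_square)
    have "((\<lambda>t. x + (sin (w * t)/w) *\<^sub>R (A *v x) + ((1 - cos (w * t))/w^2) *\<^sub>R (A *v (A *v x)))
       has_vector_derivative (0 + ((sin (w * t)/w) *\<^sub>R 0 + cos (w * t) *\<^sub>R (A *v x))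
          + (((1 - cos (w * t))/w^2) *\<^sub>R 0 + (sin (w * t)/w) *\<^sub>R (A *v (A *v x))))) (at t)"
      by (intro has_vector_derivative_add has_vector_derivative_scaleR d1 d2 has_vector_derivative_const)
    then show ?thesis unfolding flowE_def by simp
  qed
  moreover have "A *v flowE A w t x = cos (w * t) *\<^sub>R (A *v x) + (sin (w * t)/w) *\<^sub>R (A *v (A *v x))"
  proof -
    have "((1 - cos (w * t))/w^2) *\<^sub>R (-(w^2) *\<^sub>R (A *v x)) = - ((1 - cos (w * t)) *\<^sub>R (A *v x))"
      using w by simp
    then show ?thesis unfolding flow_Av[OF cube] by (simp add: algebra_simps)
  qed
  ultimately show ?thesis by simp
qed

lemma flow_comp:
  assumes cube: "\<And>y. A *v (A *v (A *v y)) = -(w^2) *\<^sub>R (A *v y)"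
  shows "flowE A w s (flowE A w t x) = x
    + (sin (w * t)/w + sin (w * s)/w + (sin (w * s)/w) * ((1 - cos (w * t))/w^2) * (-(w^2))
        + ((1 - cos (w * s))/w^2) * (sin (w * t)/w) * (-(w^2))) *\<^sub>R (A *v x)
    + ((1 - cos (w * t))/w^2 + (sin (w * s)/w) * (sin (w * t)/w) + (1 - cos (w * s))/w^2
        + ((1 - cos (w * s))/w^2) * ((1 - cos (w * t))/w^2) * (-(w^2))) *\<^sub>R (A *v (A *v x))" (is "_ = ?R")
proof -
  have "flowE A w s (flowE A w t x) = flowE A w t x + (sin (w * s)/w) *\<^sub>R (A *v flowE A w t x)
     + ((1 - cos (w * s))/w^2) *\<^sub>R (A *v (A *v flowE A w t x))"
    by (simp add: flowE_def)
  also have "\<dots> = x + (sin (w * t)/w) *\<^sub>R (A *v x) + ((1 - cos (w * t))/w^2) *\<^sub>R (A *v (A *v x))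
     + (sin (w * s)/w) *\<^sub>R (A *v x + (sin (w * t)/w) *\<^sub>R (A *v (A *v x)) + ((1 - cos (w * t))/w^2) *\<^sub>R (-(w^2) *\<^sub>R (A *v x)))
     + ((1 - cos (w * s))/w^2) *\<^sub>R (A *v (A *v x) + (sin (w * t)/w) *\<^sub>R (-(w^2) *\<^sub>R (A *v x)) + ((1 - cos (w * t))/w^2) *\<^sub>R (-(w^2) *\<^sub>R (A *v (A *v x))))"
    unfolding flow_Av[OF cube] flowE_def
    by (simp only: matrix_vector_right_distrib matrix_vector_mult_scaleR cube)
  also have "\<dots> = ?R" by (rule comb3)
  finally show ?thesis .
qed

lemma c2_poly: assumes w: "(w::real) > 0" shows "(1 - c)/w^2 + (- s/w) * (s/w) + (1 - c)/w^2
        + ((1 - c)/w^2) * ((1 - c)/w^2) * (-(w^2)) = (2*(1 - c) - s^2 - (1 - c)^2)/w^2"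
  using w by (simp add: field_simps power2_eq_square)

lemma c2_aux: assumes w: "w > 0" shows "(1 - cos th)/w^2 + (- sin th/w) * (sin th/w) + (1 - cos th)/w^2
        + ((1 - cos th)/w^2) * ((1 - cos th)/w^2) * (-(w^2)) = (0::real)"
proof -
  have e: "(1 - cos th)/w^2 + (- sin th/w) * (sin th/w) + (1 - cos th)/w^2
        + ((1 - cos th)/w^2) * ((1 - cos th)/w^2) * (-(w^2)) = (2*(1 - cos th) - (sin th)^2 - (1 - cos th)^2)/w^2"
    by (rule c2_poly[OF w])
  have n: "2*(1 - cos th) - (sin th)^2 - (1 - cos th)^2 = 0"
    by (simp add: power2_diff sin_squared_eq)
  show ?thesis unfolding e n by simp
qed

lemma flow_inv:
  assumes cube: "\<And>y. A *v (A *v (A *v y)) = -(w^2) *\<^sub>R (A *v y)" and w: "w > 0"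
  shows "flowE A w (2*pi/w - t) (flowE A w t x) = x"
proof -
  have e: "w * (2*pi/w - t) = 2*pi - w * t" using w by (simp add: field_simps)
  have s: "sin (2*pi - w * t) = - sin (w * t)" "cos (2*pi - w * t) = cos (w * t)"
    by (simp_all add: sin_diff cos_diff)
  have sc: "sin (w * t)^2 + cos (w * t)^2 = 1" by simp
  have c2: "(1 - cos (w * t))/w^2 + (- sin (w * t)/w) * (sin (w * t)/w) + (1 - cos (w * t))/w^2
        + ((1 - cos (w * t))/w^2) * ((1 - cos (w * t))/w^2) * (-(w^2)) = 0"
    by (rule c2_aux[OF w])
  have c1: "sin (w * t)/w + - sin (w * t)/w + (- sin (w * t)/w) * ((1 - cos (w * t))/w^2) * (-(w^2))
        + ((1 - cos (w * t))/w^2) * (sin (w * t)/w) * (-(w^2)) = 0"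
    using w by (simp add: field_simps)
  show ?thesis
    apply (subst flow_comp[OF cube])
    unfolding e s using c1 c2 by simp
qed


lemma reach_flow:
  assumes A: "A = sys_matrix ps v"
    and cube: "\<And>y. A *v (A *v (A *v y)) = -(w^2) *\<^sub>R (A *v y)" and w: "w > 0" and t: "t \<ge> 0"
  shows "reachable ps x (flowE A w t x)"
  unfolding reachable_def
proof (intro exI conjI)
  show "piecewise_constant_on t (\<lambda>_. v)"
    unfolding piecewise_constant_on_def by (intro exI[of _ "{}"]) auto
  have d: "\<And>s. ((\<lambda>t. flowE A w t x) has_vector_derivative (sys_matrix ps v *v flowE A w s x)) (at s)"
    using flow_deriv[OF cube w] A by simp
  show "is_trajectory ps t (\<lambda>_. v) (\<lambda>s. flowE A w s x)"
    unfolding is_trajectory_def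
  proof (intro conjI exI[of _ "{}"])
    show "continuous_on {0..t} (\<lambda>s. flowE A w s x)"
      by (rule continuous_on_vector_derivative) (use d has_vector_derivative_at_within in blast)
  qed (use d in auto)
  show "flowE A w 0 x = x" by (simp add: flowE_def)
qed (use t in auto)

lemma reach_refl: "reachable ps x x"
  unfolding reachable_def
  by (rule exI[of _ 0], rule exI[of _ "\<lambda>_ _. 0"], rule exI[of _ "\<lambda>_. x"])
     (auto simp: piecewise_constant_on_def is_trajectory_def)
lemma ev_lt: "(t::real) < a \<Longrightarrow> eventually (\<lambda>s. s < a) (at t)"
  unfolding eventually_at_topological by (intro exI[of _ "{..<a}"]) auto
lemma ev_gt: "(t::real) > a \<Longrightarrow> eventually (\<lambda>s. s > a) (at t)"
  unfolding eventually_at_topological by (intro exI[of _ "{a<..}"]) auto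


lemma ev_shift:
  assumes "eventually P (at ((t::real) - c))"
  shows "eventually (\<lambda>s. P (s - c)) (at t)"
proof -
  from assms obtain d where d: "d > 0" "\<And>y. y \<noteq> t - c \<Longrightarrow> dist y (t - c) < d \<Longrightarrow> P y"
    unfolding eventually_at by auto
  show ?thesis unfolding eventually_at
    by (rule exI[of _ d]) (use d in \<open>auto simp: dist_real_def\<close>)
qed

lemma reach_trans:
  assumes "reachable ps a b" "reachable ps b c"
  shows "reachable ps a c"
proof -
  obtain T1 u1 x1 where h1: "T1 \<ge> 0" "piecewise_constant_on T1 u1" "is_trajectory ps T1 u1 x1" "x1 0 = a" "x1 T1 = b"
    using assms(1) unfolding reachable_def by blast
  obtain T2 u2 x2 where h2: "T2 \<ge> 0" "piecewise_constant_on T2 u2" "is_trajectory ps T2 u2 x2" "x2 0 = b" "x2 T2 = c"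
    using assms(2) unfolding reachable_def by blast
  obtain S1 where S1: "finite S1" "\<And>t. t\<in>{0..T1} - S1 \<Longrightarrow> eventually (\<lambda>s. u1 s = u1 t) (at t)"
    using h1(2) unfolding piecewise_constant_on_def by blast
  obtain S2 where S2: "finite S2" "\<And>t. t\<in>{0..T2} - S2 \<Longrightarrow> eventually (\<lambda>s. u2 s = u2 t) (at t)"
    using h2(2) unfolding piecewise_constant_on_def by blast
  obtain R1 where R1: "finite R1" "continuous_on {0..T1} x1"
     "\<And>t. t\<in>{0<..<T1} - R1 \<Longrightarrow> (x1 has_vector_derivative (sys_matrix ps (u1 t) *v x1 t)) (at t)"
    using h1(3) unfolding is_trajectory_def by blast
  obtain R2 where R2: "finite R2" "continuous_on {0..T2} x2"
     "\<And>t. t\<in>{0<..<T2} - R2 \<Longrightarrow> (x2 has_vector_derivative (sys_matrix ps (u2 t) *v x2 t)) (at t)"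
    using h2(3) unfolding is_trajectory_def by blast
  define u where "u = (\<lambda>t. if t \<le> T1 then u1 t else u2 (t - T1))"
  define x where "x = (\<lambda>t. if t \<le> T1 then x1 t else x2 (t - T1))"
  show ?thesis unfolding reachable_def
  proof (intro exI conjI)
    show "T1 + T2 \<ge> 0" using h1 h2 by simp
    show "piecewise_constant_on (T1 + T2) u"
      unfolding piecewise_constant_on_def
    proof (intro exI[of _ "S1 \<union> (\<lambda>s. s + T1) ` S2 \<union> {T1}"] conjI ballI)
      show "finite (S1 \<union> (\<lambda>s. s + T1) ` S2 \<union> {T1})" using S1 S2 by simp
      fix t assume t: "t \<in> {0..T1 + T2} - (S1 \<union> (\<lambda>s. s + T1) ` S2 \<union> {T1})"
      show "eventually (\<lambda>s. u s = u t) (at t)"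
      proof (cases "t < T1")
        case True
        then have "t \<in> {0..T1} - S1" using t by auto
        from eventually_conj[OF S1(2)[OF this] ev_lt[OF True]]
        show ?thesis by (rule eventually_mono) (use True in \<open>auto simp: u_def\<close>)
      next
        case False
        then have F: "t > T1" using t by auto
        have "t - T1 \<in> {0..T2} - S2"
        proof -
          have "t - T1 \<notin> S2"
          proof
            assume "t - T1 \<in> S2" then have "t \<in> (\<lambda>s. s + T1) ` S2" by (rule rev_image_eqI) simp
            then show False using t by auto
          qed
          then show ?thesis using t F by auto
        qed
        from eventually_conj[OF ev_shift[OF S2(2)[OF this]] ev_gt[OF F]]
        show ?thesis by (rule eventually_mono) (use F in \<open>auto simp: u_def\<close>)
      qed
    qed
    show "is_trajectory ps (T1 + T2) u x"
      unfolding is_trajectory_def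
    proof (intro conjI exI[of _ "R1 \<union> (\<lambda>s. s + T1) ` R2 \<union> {T1}"] ballI)
      show "continuous_on {0..T1 + T2} x"
        unfolding x_def
      proof (rule continuous_on_cases_le[where h="\<lambda>t. t"])
        show "continuous_on {t \<in> {0..T1 + T2}. t \<le> T1} x1"
          by (rule continuous_on_subset[OF R1(2)]) auto
        show "continuous_on {t \<in> {0..T1 + T2}. T1 \<le> t} (\<lambda>t. x2 (t - T1))"
          by (rule continuous_on_compose2[OF R2(2)]) (auto intro!: continuous_intros)
        show "continuous_on {0..T1 + T2} (\<lambda>t. t)" by (rule continuous_on_id)
        fix t assume "t \<in> {0..T1 + T2}" "t = T1"
        then show "x1 t = x2 (t - T1)" using h1 h2 by simp
      qed
      show "finite (R1 \<union> (\<lambda>s. s + T1) ` R2 \<union> {T1})" using R1 R2 by simp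
      fix t assume t: "t \<in> {0<..<T1 + T2} - (R1 \<union> (\<lambda>s. s + T1) ` R2 \<union> {T1})"
      show "(x has_vector_derivative (sys_matrix ps (u t) *v x t)) (at t)"
      proof (cases "t < T1")
        case True
        then have "t \<in> {0<..<T1} - R1" using t by auto
        from R1(3)[OF this] have "(x1 has_vector_derivative (sys_matrix ps (u t) *v x t)) (at t)"
          using True by (simp add: u_def x_def)
        then show ?thesis
          by (rule has_vector_derivative_transform_within_open[where S="{..<T1}"]) (use True in \<open>auto simp: x_def\<close>)
      next
        case False
        then have F: "t > T1" using t by auto
        have "t - T1 \<in> {0<..<T2} - R2"
        proof -
          have "t - T1 \<notin> R2"
          proof
            assume "t - T1 \<in> R2" then have "t \<in> (\<lambda>s. s + T1) ` R2" by (rule rev_image_eqI) simp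
            then show False using t by auto
          qed
          then show ?thesis using t F by auto
        qed
        from R2(3)[OF this] have d2: "(x2 has_vector_derivative (sys_matrix ps (u t) *v x t)) (at ((\<lambda>s. s - T1) t))"
          using F by (simp add: u_def x_def)
        have d1: "((\<lambda>s. s - T1) has_vector_derivative 1) (at t)"
          by (auto intro!: derivative_eq_intros)
        from vector_diff_chain_at[OF d1 d2]
        have "((\<lambda>s. x2 (s - T1)) has_vector_derivative (sys_matrix ps (u t) *v x t)) (at t)"
          by (simp add: o_def)
        then show ?thesis
          by (rule has_vector_derivative_transform_within_open[where S="{T1<..}"]) (use F in \<open>auto simp: x_def\<close>)
      qed
    qed
    show "x 0 = a" using h1 by (simp add: x_def)
    show "x (T1 + T2) = c" using h1 h2 by (auto simp: x_def)
  qed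
qed


lemma scaleR_mv_nth: "((c *\<^sub>R M) *v x) $ m = c * (M *v x) $ m"
  by (simp add: matrix_vector_mult_def sum_distrib_left mult.assoc)

definition rotm :: "'n \<Rightarrow> 'n \<Rightarrow> real \<Rightarrow> real \<Rightarrow> real^'n \<Rightarrow> real^'n" where
  "rotm a b cs sn x = (\<chi> m. if m = a then cs * x$a - sn * x$b else if m = b then sn * x$a + cs * x$b else x$m)"

lemma rotm_nth: "rotm a b cs sn x $ m = (if m = a then cs * x$a - sn * x$b else if m = b then sn * x$a + cs * x$b else x$m)"
  by (simp add: rotm_def)

lemma flowE_nth: "flowE A w t x $ m = x$m + (sin (w * t)/w) * (A *v x) $ m + ((1 - cos (w * t))/w^2) * (A *v (A *v x)) $ m"
  by (simp add: flowE_def)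

lemma A2_nth:
  assumes "i \<noteq> j" "j \<noteq> l" "i \<noteq> l"
  shows "((\<alpha> *\<^sub>R Omega i j + \<beta> *\<^sub>R Omega j l) *v x) $ m =
    (if m = i then \<alpha> * x$j else if m = j then \<beta> * x$l - \<alpha> * x$i else if m = l then - \<beta> * x$j else 0)"
  using assms by (simp add: matrix_vector_mult_add_rdistrib scaleR_mv_nth Omega_mv)

lemma cube_A2:
  assumes d: "i \<noteq> j" "j \<noteq> l" "i \<noteq> l" and a: "\<alpha>^2 = 1"
  shows "(\<alpha> *\<^sub>R Omega i j + \<beta> *\<^sub>R Omega j l) *v ((\<alpha> *\<^sub>R Omega i j + \<beta> *\<^sub>R Omega j l) *v ((\<alpha> *\<^sub>R Omega i j + \<beta> *\<^sub>R Omega j l) *v y))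
    = - ((sqrt (1 + \<beta>^2))^2) *\<^sub>R ((\<alpha> *\<^sub>R Omega i j + \<beta> *\<^sub>R Omega j l) *v y)"
proof -
  have s: "(sqrt (1 + \<beta>^2))^2 = 1 + \<beta>^2" by simp
  have a3: "\<And>z. \<alpha> * (\<alpha> * z) = z" using a by (simp add: power2_eq_square flip: mult.assoc)
  show ?thesis unfolding vec_eq_iff s
  proof
    fix m
    show "((\<alpha> *\<^sub>R Omega i j + \<beta> *\<^sub>R Omega j l) *v ((\<alpha> *\<^sub>R Omega i j + \<beta> *\<^sub>R Omega j l) *v ((\<alpha> *\<^sub>R Omega i j + \<beta> *\<^sub>R Omega j l) *v y))) $ m
      = (- (1 + \<beta>^2) *\<^sub>R ((\<alpha> *\<^sub>R Omega i j + \<beta> *\<^sub>R Omega j l) *v y)) $ m"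
      unfolding vector_scaleR_component A2_nth[OF d] using d
      by (auto simp: algebra_simps power2_eq_square a3)
  qed
qed


definition good :: "('n::finite \<times> 'n) list \<Rightarrow> (real^'n \<Rightarrow> real^'n) \<Rightarrow> bool" where
  "good ps M \<longleftrightarrow> (\<forall>x. reachable ps x (M x) \<and> reachable ps (M x) x)"

lemma good_comp: "good ps M \<Longrightarrow> good ps N \<Longrightarrow> good ps (\<lambda>x. M (N x))"
  unfolding good_def
proof (intro allI conjI)
  fix x assume M: "\<forall>x. reachable ps x (M x) \<and> reachable ps (M x) x"
    and N: "\<forall>x. reachable ps x (N x) \<and> reachable ps (N x) x"
  show "reachable ps x (M (N x))" using M N reach_trans by blast
  show "reachable ps (M (N x)) x" using M N reach_trans by blast
qed

lemma good_flow:
  assumes A: "A = sys_matrix ps v"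
    and cube: "\<And>y. A *v (A *v (A *v y)) = -(w^2) *\<^sub>R (A *v y)" and w: "w > 0"
    and t: "0 \<le> t" "t \<le> 2*pi/w"
  shows "good ps (flowE A w t)"
  unfolding good_def
proof
  fix x
  show "reachable ps x (flowE A w t x) \<and> reachable ps (flowE A w t x) x"
  proof
    show "reachable ps x (flowE A w t x)" by (rule reach_flow[OF A cube w t(1)])
    have "reachable ps (flowE A w t x) (flowE A w (2*pi/w - t) (flowE A w t x))"
      by (rule reach_flow[OF A cube w]) (use t in simp)
    then show "reachable ps (flowE A w t x) x" unfolding flow_inv[OF cube w] .
  qed
qed

definition rot :: "('n::finite \<times> 'n) list \<Rightarrow> 'n \<Rightarrow> 'n \<Rightarrow> bool" where
  "rot ps a b \<longleftrightarrow> a \<noteq> b \<and> (\<forall>cs sn. cs^2 + sn^2 = 1 \<longrightarrow> good ps (rotm a b cs sn))"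

lemma rot_sym: assumes "rot ps a b" shows "rot ps b a"
proof -
  have e: "rotm b a cs sn = rotm a b cs (-sn)" for cs sn
    using assms unfolding rot_def fun_eq_iff vec_eq_iff rotm_nth by auto
  show ?thesis using assms unfolding rot_def e by auto
qed

lemma rot_conj: assumes "rot ps a b" "rot ps b c" "a \<noteq> c" shows "rot ps a c"
proof -
  have d: "a \<noteq> b" "b \<noteq> c" using assms by (auto simp: rot_def)
  have e: "rotm a c cs sn = (\<lambda>x. rotm b c 0 (-1) (rotm a b cs (-sn) (rotm b c 0 1 x)))" for cs sn
    using d assms(3) unfolding fun_eq_iff vec_eq_iff rotm_nth by auto
  show ?thesis unfolding rot_def
  proof (intro conjI allI impI)
    fix cs sn :: real assume u: "cs^2 + sn^2 = 1"
    have g1: "good ps (rotm b c 0 (-1))" "good ps (rotm b c 0 1)" using assms(2) by (auto simp: rot_def)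
    have g2: "good ps (rotm a b cs (-sn))" using assms(1) u by (auto simp: rot_def)
    show "good ps (rotm a c cs sn)" unfolding e by (rule good_comp[OF g1(1) good_comp[OF g2 g1(2)]])
  qed (use assms in simp)
qed


lemma rotm_inv:
  assumes u: "cs^2 + sn^2 = 1" and ab: "a \<noteq> b"
  shows "rotm a b cs sn (rotm a b cs (-sn) x) = x"
proof -
  have u': "cs * cs + sn * sn = 1" using u by (simp add: power2_eq_square)
  have 1: "cs * (cs * p + sn * q) - sn * (cs * q - sn * p) = p" for p q
    using u' by algebra
  have 2: "sn * (cs * p + sn * q) + cs * (cs * q - sn * p) = q" for p q
    using u' by algebra
  have 3: "cs * (cs * p) + sn * (sn * p) = p" for p
    using u' by algebra
  show ?thesis unfolding vec_eq_iff rotm_nth using ab by (auto simp: algebra_simps 3)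
qed


lemma rot_drift:
  assumes ab: "fst (ps!0) \<noteq> snd (ps!0)"
  shows "rot ps (fst (ps!0)) (snd (ps!0))"
proof -
  define a where "a = fst (ps!0)"
  define b where "b = snd (ps!0)"
  have ab': "a \<noteq> b" using ab by (simp add: a_def b_def)
  define A where "A = Omega a b"
  have A: "A = sys_matrix ps (\<lambda>j. 0)" by (simp add: sys_matrix_zero A_def a_def b_def)
  have cube: "\<And>y. A *v (A *v (A *v y)) = -(1^2) *\<^sub>R (A *v y)"
    unfolding vec_eq_iff A_def using ab' by (auto simp: Omega_mv)
  have e: "flowE A 1 t = rotm a b (cos t) (- sin t)" for t
    unfolding fun_eq_iff vec_eq_iff flowE_nth rotm_nth A_def using ab' by (auto simp: Omega_mv algebra_simps)
  show ?thesis unfolding rot_def a_def[symmetric] b_def[symmetric]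
  proof (intro conjI allI impI)
    fix cs sn :: real assume u: "cs^2 + sn^2 = 1"
    then have "cs^2 + (-sn)^2 = 1" by simp
    from sincos_total_2pi_le[OF this] obtain t where t: "0 \<le> t" "t \<le> 2*pi" "cs = cos t" "-sn = sin t" by blast
    have "good ps (flowE A 1 t)" by (rule good_flow[OF A cube]) (use t in auto)
    moreover have "sn = - sin t" using t(4) by simp
    ultimately show "good ps (rotm a b cs sn)" unfolding e using t(3) by simp
  qed (rule ab')
qed

lemma rot_disj:
  assumes k: "k \<in> {1..<length ps}"
    and d: "fst (ps!0) \<noteq> snd (ps!0)" "fst (ps!k) \<noteq> snd (ps!k)"
       "fst (ps!k) \<noteq> fst (ps!0)" "fst (ps!k) \<noteq> snd (ps!0)"
       "snd (ps!k) \<noteq> fst (ps!0)" "snd (ps!k) \<noteq> snd (ps!0)"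
    and r: "rot ps (fst (ps!0)) (snd (ps!0))"
  shows "rot ps (fst (ps!k)) (snd (ps!k))"
proof -
  define a where "a = fst (ps!0)"
  define b where "b = snd (ps!0)"
  define p where "p = fst (ps!k)"
  define q where "q = snd (ps!k)"
  have dd: "a \<noteq> b" "p \<noteq> q" "p \<noteq> a" "p \<noteq> b" "q \<noteq> a" "q \<noteq> b"
    using d by (simp_all add: a_def b_def p_def q_def)
  define A where "A = Omega a b + 1 *\<^sub>R Omega p q"
  have A: "A = sys_matrix ps (\<lambda>j. if j = k then 1 else 0)"
    using sys_matrix_single[OF k, of 1] by (simp add: A_def a_def b_def p_def q_def)
  have Anth: "(A *v x) $ m = (Omega a b *v x) $ m + (Omega p q *v x) $ m" for x m
    by (simp add: A_def matrix_vector_mult_add_rdistrib)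
  have cube: "\<And>y. A *v (A *v (A *v y)) = -(1^2) *\<^sub>R (A *v y)"
    unfolding vec_eq_iff using dd by (auto simp: Omega_mv Anth)
  have e: "flowE A 1 t x = rotm a b (cos t) (- sin t) (rotm p q (cos t) (- sin t) x)" for t x
    unfolding vec_eq_iff flowE_nth rotm_nth using dd by (auto simp: Omega_mv Anth algebra_simps)
  have rr: "rotm a b cs sn (rotm a b cs (- sn) y) = y" if "cs^2 + sn^2 = 1" for cs sn y
    by (rule rotm_inv[OF that dd(1)])
  show ?thesis unfolding rot_def p_def[symmetric] q_def[symmetric]
  proof (intro conjI allI impI)
    fix cs sn :: real assume u: "cs^2 + sn^2 = 1"
    then have "cs^2 + (-sn)^2 = 1" by simp
    from sincos_total_2pi_le[OF this] obtain t where t: "0 \<le> t" "t \<le> 2*pi" "cs = cos t" "-sn = sin t" by blast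
    have g1: "good ps (flowE A 1 t)" by (rule good_flow[OF A cube]) (use t in auto)
    have g2: "good ps (rotm a b (cos t) (sin t))"
      using r unfolding rot_def a_def[symmetric] b_def[symmetric] by simp
    have "good ps (\<lambda>x. rotm a b (cos t) (sin t) (flowE A 1 t x))" by (rule good_comp[OF g2 g1])
    moreover have "(\<lambda>x. rotm a b (cos t) (sin t) (flowE A 1 t x)) = rotm p q cs sn"
    proof
      fix x
      have "rotm a b (cos t) (sin t) (flowE A 1 t x) = rotm p q (cos t) (- sin t) x"
        unfolding e using rr[of "cos t" "sin t"] by simp
      moreover have "sn = - sin t" using t(4) by simp
      ultimately show "rotm a b (cos t) (sin t) (flowE A 1 t x) = rotm p q cs sn x" using t(3) by simp
    qed
    ultimately show "good ps (rotm p q cs sn)" by simp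
  qed (rule dd(2))
qed


lemma rot_share:
  assumes d: "i \<noteq> j" "j \<noteq> l" "i \<noteq> l" and a: "\<alpha>^2 = 1"
    and dv: "\<And>\<beta>. \<exists>v. sys_matrix ps v = \<alpha> *\<^sub>R Omega i j + \<beta> *\<^sub>R Omega j l"
  shows "rot ps i l"
proof -
  define B where "B \<beta> = \<alpha> *\<^sub>R Omega i j + \<beta> *\<^sub>R Omega j l" for \<beta>
  define w where "w \<beta> = sqrt (1 + \<beta>^2)" for \<beta>
  have wpos: "w \<beta> > 0" for \<beta> unfolding w_def by (simp add: add_pos_nonneg)
  have w2: "(w \<beta>)^2 = 1 + \<beta>^2" for \<beta> unfolding w_def by simp
  have cubeB: "\<And>y. B \<beta> *v (B \<beta> *v (B \<beta> *v y)) = -((w \<beta>)^2) *\<^sub>R (B \<beta> *v y)" for \<beta>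
    unfolding B_def w_def by (rule cube_A2[OF d a])
  have goodH: "good ps (flowE (B \<beta>) (w \<beta>) (pi / w \<beta>))" for \<beta>
  proof -
    obtain v where v: "sys_matrix ps v = B \<beta>" using dv[of \<beta>] unfolding B_def by blast
    show ?thesis
      by (rule good_flow[OF v[symmetric] cubeB wpos]) (use wpos[of \<beta>] in \<open>auto simp: field_simps\<close>)
  qed
  have Hf: "flowE (B \<beta>) (w \<beta>) (pi / w \<beta>) x = x + (2/(1+\<beta>^2)) *\<^sub>R (B \<beta> *v (B \<beta> *v x))" for \<beta> x
  proof -
    have "w \<beta> * (pi / w \<beta>) = pi" using wpos[of \<beta>] by simp
    then show ?thesis unfolding flowE_def w2 by simp
  qed
  have a3: "\<And>z. \<alpha> * (\<alpha> * z) = z" using a by (simp add: power2_eq_square flip: mult.assoc)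
  have comp: "flowE (B 0) (w 0) (pi / w 0) (flowE (B \<beta>) (w \<beta>) (pi / w \<beta>) x)
      = rotm i l (2/(1 + \<beta>^2) - 1) (\<alpha> * \<beta> * (2/(1 + \<beta>^2))) x" for \<beta> x
  proof -
    define \<gamma> where "\<gamma> = 2/(1 + \<beta>^2)"
    have p: "1 + \<beta>^2 > 0" by (simp add: add_pos_nonneg)
    have hg: "\<gamma> * (1 + \<beta>^2) = 2" unfolding \<gamma>_def using p by (simp add: field_simps)
    have hg2: "\<And>z. \<gamma> * z + \<beta> * (\<beta> * (\<gamma> * z)) = z * 2"
    proof -
      fix z have "\<gamma> * z + \<beta> * (\<beta> * (\<gamma> * z)) = (\<gamma> * (1 + \<beta>^2)) * z" by (simp add: algebra_simps power2_eq_square)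
      then show "\<gamma> * z + \<beta> * (\<beta> * (\<gamma> * z)) = z * 2" using hg by simp
    qed
    show ?thesis
      unfolding Hf unfolding \<gamma>_def[symmetric] vec_eq_iff rotm_nth vector_add_component vector_scaleR_component B_def A2_nth[OF d]
      using d by (auto simp: algebra_simps a3 hg2)
  qed
  have P: "good ps (rotm i l cs sn)" if u: "cs^2 + sn^2 = 1" and c: "cs \<noteq> -1" for cs sn
  proof -
    have "cs^2 \<le> 1" using u by (metis le_add_same_cancel1 zero_le_power2)
    then have "\<bar>cs\<bar> \<le> 1" by (simp add: abs_square_le_1)
    then have cp: "1 + cs > 0" using c by auto
    define \<beta> where "\<beta> = \<alpha> * sn / (1 + cs)"
    have hb2: "\<beta>^2 = sn^2 / (1 + cs)^2" unfolding \<beta>_def by (simp add: power_mult_distrib power_divide a)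
    have sn2: "sn^2 = (1 - cs) * (1 + cs)" using u by (simp add: algebra_simps power2_eq_square)
    have h1: "1 + \<beta>^2 = 2 / (1 + cs)"
    proof -
      have "sn^2 / (1 + cs)^2 = (1 - cs) / (1 + cs)"
        unfolding sn2 unfolding power2_eq_square using cp by simp
      then show ?thesis unfolding hb2 using cp by (simp add: field_simps)
    qed
    have e1: "2/(1 + \<beta>^2) - 1 = cs" unfolding h1 using cp by (simp add: field_simps)
    have h2: "2/(1 + \<beta>^2) = 1 + cs" unfolding h1 using cp by (simp add: field_simps)
    have e2: "\<alpha> * \<beta> * (2/(1 + \<beta>^2)) = sn"
      unfolding h2 unfolding \<beta>_def using cp a by (simp add: power2_eq_square flip: mult.assoc)
    have "good ps (\<lambda>x. flowE (B 0) (w 0) (pi / w 0) (flowE (B \<beta>) (w \<beta>) (pi / w \<beta>) x))"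
      by (rule good_comp[OF goodH goodH])
    then show ?thesis unfolding comp e1 e2 by (simp add: fun_eq_iff[symmetric])
  qed
  show ?thesis unfolding rot_def
  proof (intro conjI allI impI)
    fix cs sn :: real assume u: "cs^2 + sn^2 = 1"
    show "good ps (rotm i l cs sn)"
    proof (cases "cs = -1")
      case False then show ?thesis using P u by blast
    next
      case True
      then have s0: "sn = 0" using u by simp
      have g: "good ps (rotm i l 0 1)" using P by simp
      have "rotm i l (-1) 0 = (\<lambda>x. rotm i l 0 1 (rotm i l 0 1 x))"
        unfolding fun_eq_iff vec_eq_iff rotm_nth using d by auto
      then show ?thesis using good_comp[OF g g] True s0 by simp
    qed
  qed (rule d(3))
qed


lemma rot_edge:
  assumes dist: "\<forall>(i, j) \<in> set ps. i \<noteq> j" and k: "k < length ps"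
  shows "rot ps (fst (ps!k)) (snd (ps!k))"
proof -
  have ne: "0 < length ps" using k by linarith
  define a where "a = fst (ps!0)"
  define b where "b = snd (ps!0)"
  define p where "p = fst (ps!k)"
  define q where "q = snd (ps!k)"
  have ab: "a \<noteq> b" using dist nth_mem[OF ne] unfolding a_def b_def by (cases "ps!0") auto
  have pq: "p \<noteq> q" using dist nth_mem[OF k] unfolding p_def q_def by (cases "ps!k") auto
  have r0: "rot ps a b" unfolding a_def b_def by (rule rot_drift) (use ab in \<open>simp add: a_def b_def\<close>)
  have r0': "rot ps b a" by (rule rot_sym[OF r0])
  show ?thesis unfolding p_def[symmetric] q_def[symmetric]
  proof (cases "k = 0")
    case True then show "rot ps p q" using r0 by (simp add: p_def q_def a_def b_def)
  next
    case False
    then have k1: "k \<in> {1..<length ps}" using k by simp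
    have S: "sys_matrix ps (\<lambda>j. if j = k then c else 0) = Omega a b + c *\<^sub>R Omega p q" for c
      using sys_matrix_single[OF k1] by (simp add: a_def b_def p_def q_def)
    have sw_ab: "Omega a b = (-1) *\<^sub>R Omega b a" using Omega_swap[of a b] by simp
    show "rot ps p q"
    proof (cases "p = a \<and> q = b")
      case True then show ?thesis using r0 by simp
    next
      case n1: False
      show ?thesis
      proof (cases "p = b \<and> q = a")
        case True then show ?thesis using r0' by simp
      next
        case n2: False
        show ?thesis
        proof (cases "p \<noteq> a \<and> p \<noteq> b \<and> q \<noteq> a \<and> q \<noteq> b")
          case True
          show ?thesis unfolding p_def q_def
            by (rule rot_disj[OF k1]) (use True ab pq r0 in \<open>simp_all add: a_def b_def p_def q_def\<close>)
        next
          case n3: False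
          consider "p = b" "q \<noteq> a" | "q = b" "p \<noteq> a" | "p = a" "q \<noteq> b" | "q = a" "p \<noteq> b"
            using n1 n2 n3 by blast
          then show ?thesis
          proof cases
            case 1
            have "rot ps a q"
            proof (rule rot_share[where j = b and \<alpha> = 1])
              fix \<beta> show "\<exists>v. sys_matrix ps v = 1 *\<^sub>R Omega a b + \<beta> *\<^sub>R Omega b q"
                using S[of \<beta>] 1 by auto
            qed (use 1 ab pq in auto)
            then have "rot ps b q" using rot_conj[OF r0'] 1 pq by auto
            then show ?thesis using 1 by simp
          next
            case 2
            have "rot ps a p"
            proof (rule rot_share[where j = b and \<alpha> = 1])
              fix \<beta> show "\<exists>v. sys_matrix ps v = 1 *\<^sub>R Omega a b + \<beta> *\<^sub>R Omega b p"
                using S[of "-\<beta>"] 2 Omega_swap[of p b] by (intro exI[of _ "\<lambda>j. if j = k then - \<beta> else 0"]) simp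
            qed (use 2 ab pq in auto)
            then have "rot ps b p" using rot_conj[OF r0'] 2 pq by auto
            then show ?thesis using 2 rot_sym by simp
          next
            case 3
            have "rot ps b q"
            proof (rule rot_share[where j = a and \<alpha> = "-1"])
              fix \<beta> show "\<exists>v. sys_matrix ps v = (-1) *\<^sub>R Omega b a + \<beta> *\<^sub>R Omega a q"
                using S[of \<beta>] 3 sw_ab by (intro exI[of _ "\<lambda>j. if j = k then \<beta> else 0"]) simp
            qed (use 3 ab pq in auto)
            then have "rot ps a q" using rot_conj[OF r0] 3 pq by auto
            then show ?thesis using 3 by simp
          next
            case 4
            have "rot ps b p"
            proof (rule rot_share[where j = a and \<alpha> = "-1"])
              fix \<beta> show "\<exists>v. sys_matrix ps v = (-1) *\<^sub>R Omega b a + \<beta> *\<^sub>R Omega a p"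
                using S[of "-\<beta>"] 4 sw_ab Omega_swap[of p a] by (intro exI[of _ "\<lambda>j. if j = k then - \<beta> else 0"]) simp
            qed (use 4 ab pq in auto)
            then have "rot ps a p" using rot_conj[OF r0] 4 pq by auto
            then show ?thesis using 4 rot_sym by simp
          qed
        qed
      qed
    qed
  qed
qed

lemma rot_E:
  assumes dist: "\<forall>(i, j) \<in> set ps. i \<noteq> j" and e: "(x, y) \<in> set ps \<union> (set ps)\<inverse>"
  shows "rot ps x y"
proof -
  have "rot ps x y" if "(x, y) \<in> set ps" for x y
  proof -
    from that obtain k where "k < length ps" "ps!k = (x, y)" by (auto simp: in_set_conv_nth)
    then show ?thesis using rot_edge[OF dist, of k] by simp
  qed
  note h = this
  show ?thesis
  proof (cases "(x, y) \<in> set ps")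
    case True then show ?thesis by (rule h)
  next
    case False
    then have "(y, x) \<in> set ps" using e by auto
    then show ?thesis by (rule rot_sym[OF h])
  qed
qed

lemma rot_path:
  assumes dist: "\<forall>(i, j) \<in> set ps. i \<noteq> j" and p: "(r, v) \<in> (set ps \<union> (set ps)\<inverse>)\<^sup>*"
  shows "v \<noteq> r \<Longrightarrow> rot ps r v"
  using p
proof (induction rule: rtrancl_induct)
  case base then show ?case by simp
next
  case (step y z)
  show ?case
  proof (cases "y = r")
    case True then show ?thesis using rot_E[OF dist step(2)] by simp
  next
    case False
    then have "rot ps r y" using step by simp
    then show ?thesis using rot_conj rot_E[OF dist step(2)] step(4) by blast
  qed
qed


lemma good_id: "good ps (\<lambda>x. x)"
  unfolding good_def using reach_refl by blast

lemma collect: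
  assumes R: "\<And>w. w \<noteq> r \<Longrightarrow> rot ps r w"
  shows "finite W \<Longrightarrow> r \<notin> W \<Longrightarrow> \<exists>M. good ps M \<and> (\<forall>w\<in>W. M x $ w = 0) \<and>
      (\<forall>m. m \<notin> W \<longrightarrow> m \<noteq> r \<longrightarrow> M x $ m = x $ m) \<and> (M x $ r)^2 = (x $ r)^2 + (\<Sum>w\<in>W. (x $ w)^2)"
proof (induction W rule: finite_induct)
  case empty
  show ?case by (intro exI[of _ "\<lambda>x. x"]) (simp add: good_id)
next
  case (insert w W)
  then obtain M where M: "good ps M" "\<forall>v\<in>W. M x $ v = 0"
      "\<forall>m. m \<notin> W \<longrightarrow> m \<noteq> r \<longrightarrow> M x $ m = x $ m" "(M x $ r)^2 = (x $ r)^2 + (\<Sum>w\<in>W. (x $ w)^2)"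
    by auto
  have wr: "w \<noteq> r" using insert by auto
  define y where "y = M x"
  have yw: "y $ w = x $ w" using M(3) insert wr by (simp add: y_def)
  define \<rho> where "\<rho> = sqrt ((y $ r)^2 + (y $ w)^2)"
  define cs where "cs = (if \<rho> = 0 then 1 else y $ r / \<rho>)"
  define sn where "sn = (if \<rho> = 0 then 0 else - (y $ w) / \<rho>)"
  have \<rho>2: "\<rho>^2 = (y $ r)^2 + (y $ w)^2" unfolding \<rho>_def by simp
  have u: "cs^2 + sn^2 = 1"
  proof (cases "\<rho> = 0")
    case False
    then have "\<rho>^2 \<noteq> 0" by simp
    then have nz: "(y $ r)^2 + (y $ w)^2 \<noteq> 0" unfolding \<rho>2 .
    have "cs^2 + sn^2 = ((y $ r)^2 + (y $ w)^2) / \<rho>^2"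
      unfolding cs_def sn_def using False by (simp add: power_divide add_divide_distrib)
    then show ?thesis using nz \<rho>2 by simp
  qed (simp add: cs_def sn_def)
  have g: "good ps (rotm r w cs sn)" using R[OF wr] u unfolding rot_def by blast
  have z: "(y $ r)^2 + (y $ w)^2 = 0 \<Longrightarrow> y $ r = 0 \<and> y $ w = 0"
    by (simp add: sum_power2_eq_zero_iff)
  have c1: "sn * y $ r + cs * y $ w = 0"
  proof (cases "\<rho> = 0")
    case True then show ?thesis using z \<rho>2 by (simp add: cs_def sn_def)
  next
    case False then show ?thesis by (simp add: cs_def sn_def field_simps)
  qed
  have c2: "(cs * y $ r - sn * y $ w)^2 = (y $ r)^2 + (y $ w)^2"
  proof (cases "\<rho> = 0")
    case True then show ?thesis using z \<rho>2 by (simp add: cs_def sn_def)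
  next
    case False
    have "cs * y $ r - sn * y $ w = \<rho>^2 / \<rho>" unfolding \<rho>2 using False
      by (simp add: cs_def sn_def field_simps power2_eq_square)
    also have "\<dots> = \<rho>" using False by (simp add: power2_eq_square)
    finally show ?thesis using \<rho>2 by simp
  qed
  show ?case
  proof (intro exI[of _ "\<lambda>x. rotm r w cs sn (M x)"] conjI allI impI ballI)
    show "good ps (\<lambda>x. rotm r w cs sn (M x))" by (rule good_comp[OF g M(1)])
    fix v assume v: "v \<in> insert w W"
    show "rotm r w cs sn (M x) $ v = 0"
    proof (cases "v = w")
      case True then show ?thesis using c1 wr by (simp add: rotm_nth y_def)
    next
      case False then have "v \<in> W" "v \<noteq> r" using v insert by auto
      then show ?thesis using False M(2) by (simp add: rotm_nth)
    qed
  next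
    fix m assume m: "m \<notin> insert w W" "m \<noteq> r"
    then show "rotm r w cs sn (M x) $ m = x $ m" using M(3) by (simp add: rotm_nth)
  next
    have "(rotm r w cs sn (M x) $ r)^2 = (y $ r)^2 + (y $ w)^2" using c2 by (simp add: rotm_nth y_def)
    also have "\<dots> = (x $ r)^2 + (\<Sum>w\<in>insert w W. (x $ w)^2)"
      using M(4) yw insert by (simp add: y_def)
    finally show "(rotm r w cs sn (M x) $ r)^2 = (x $ r)^2 + (\<Sum>w\<in>insert w W. (x $ w)^2)" .
  qed
qed

lemma norm_sum_sq: "norm (x::real^'n) = 1 \<Longrightarrow> (\<Sum>i\<in>UNIV. (x $ i)^2) = 1"
proof -
  assume x: "norm x = 1"
  have "x \<bullet> x = 1" using x by (simp add: dot_square_norm)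
  then show ?thesis by (simp add: inner_vec_def power2_eq_square)
qed

lemma to_axis:
  assumes R: "\<And>w. w \<noteq> r \<Longrightarrow> rot ps r w" and card: "CARD('n) \<ge> 2"
    and x: "norm (x::real^'n) = 1"
  shows "\<exists>M. good ps M \<and> M x = axis r 1"
proof -
  obtain M where M: "good ps M" "\<forall>w\<in>UNIV - {r}. M x $ w = 0"
      "(M x $ r)^2 = (x $ r)^2 + (\<Sum>w\<in>UNIV - {r}. (x $ w)^2)"
    using collect[OF R, of "UNIV - {r}" x] by auto
  have "(\<Sum>i\<in>UNIV. (x $ i)^2) = (x $ r)^2 + (\<Sum>w\<in>UNIV - {r}. (x $ w)^2)"
    by (simp add: sum.remove)
  then have sq: "(M x $ r)^2 = 1" using M(3) norm_sum_sq[OF x] by simp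
  obtain w where wr: "w \<noteq> r"
  proof -
    have "\<not> UNIV \<subseteq> {r}"
    proof
      assume "UNIV \<subseteq> {r}"
      then have "CARD('n) \<le> card {r}" by (intro card_mono) auto
      then show False using card by simp
    qed
    then show ?thesis using that by blast
  qed
  show ?thesis
  proof (cases "M x $ r = 1")
    case True
    then have "M x = axis r 1" using M(2) by (auto simp: vec_eq_iff axis_def)
    then show ?thesis using M(1) by blast
  next
    case False
    then have m1: "M x $ r = -1" using sq by (metis power2_eq_1_iff)
    have g: "good ps (rotm r w (-1) 0)" using R[OF wr] unfolding rot_def by simp
    have "rotm r w (-1) 0 (M x) = axis r 1"
      using M(2) m1 wr by (auto simp: vec_eq_iff axis_def rotm_nth)
    then show ?thesis using good_comp[OF g M(1)] by blast
  qed
qed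


definition Qf :: "'n::finite set \<Rightarrow> real^'n \<Rightarrow> real^'n^'n \<Rightarrow> real" where
  "Qf D y M = (\<Sum>a\<in>D. y $ a * (M *v y) $ a)"

lemma Qf_add: "Qf D y (M + N) = Qf D y M + Qf D y N"
  by (simp add: Qf_def matrix_vector_mult_add_rdistrib distrib_left sum.distrib)

lemma Qf_scale: "Qf D y (c *\<^sub>R M) = c * Qf D y M"
  by (simp add: Qf_def scaleR_mv_nth sum_distrib_left algebra_simps)

lemma Qf_zero: "Qf D y 0 = 0"
  by (simp add: Qf_def)

lemma Qf_sum: "finite S \<Longrightarrow> Qf D y (sum f S) = (\<Sum>k\<in>S. Qf D y (f k))"
  by (induction S rule: finite_induct) (simp_all add: Qf_zero Qf_add)

lemma Qf_Omega:
  assumes "p \<in> D \<longleftrightarrow> q \<in> D"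
  shows "Qf D y (Omega p q) = 0"
proof -
  have "Qf D y (Omega p q) = (\<Sum>a\<in>D. (if a = p then y $ a * y $ q else 0)) - (\<Sum>a\<in>D. (if a = q then y $ a * y $ p else 0))"
  proof -
    have "Qf D y (Omega p q) = (\<Sum>a\<in>D. (if a = p then y $ a * y $ q else 0) - (if a = q then y $ a * y $ p else 0))"
      unfolding Qf_def Omega_mv by (rule sum.cong) (auto simp: right_diff_distrib)
    then show ?thesis by (simp add: sum_subtractf)
  qed
  also have "\<dots> = 0" using assms by (simp add: mult.commute)
  finally show ?thesis .
qed

lemma Qf_sys:
  assumes cl: "\<And>p q. (p, q) \<in> set ps \<Longrightarrow> (p \<in> D \<longleftrightarrow> q \<in> D)" and ne: "ps \<noteq> []"
  shows "Qf D y (sys_matrix ps v) = 0"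
proof -
  have m: "(fst (ps!k), snd (ps!k)) \<in> set ps" if "k < length ps" for k using that by simp
  have "Qf D y (sys_matrix ps v) = Qf D y (Omega (fst (ps!0)) (snd (ps!0)))
     + (\<Sum>k\<in>{1..<length ps}. v k * Qf D y (Omega (fst (ps!k)) (snd (ps!k))))"
    unfolding sys_matrix_def Qf_add by (simp add: Qf_sum Qf_scale)
  also have "\<dots> = 0"
  proof -
    have h0: "Qf D y (Omega (fst (ps!0)) (snd (ps!0))) = 0"
      by (rule Qf_Omega, rule cl, rule m) (use ne in simp)
    have hk: "(\<Sum>k\<in>{1..<length ps}. v k * Qf D y (Omega (fst (ps!k)) (snd (ps!k)))) = 0"
    proof (rule sum.neutral, rule ballI)
      fix k assume "k \<in> {1..<length ps}"
      then have "Qf D y (Omega (fst (ps!k)) (snd (ps!k))) = 0"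
        by (intro Qf_Omega cl m) simp
      then show "v k * Qf D y (Omega (fst (ps!k)) (snd (ps!k))) = 0" by simp
    qed
    show ?thesis using h0 hk by simp
  qed
  finally show ?thesis .
qed


lemma not_conn:
  assumes ne: "ps \<noteq> []" and nc: "\<not> graph_connected ps"
  shows "\<not> controllable_on_sphere ps"
proof
  assume ctrl: "controllable_on_sphere ps"
  define E where "E = set ps \<union> (set ps)\<inverse>"
  from nc obtain v w where vw: "(v, w) \<notin> E\<^sup>*" unfolding graph_connected_def E_def by blast
  define D where "D = {a. (v, a) \<notin> E\<^sup>*}"
  have cl: "p \<in> D \<longleftrightarrow> q \<in> D" if pq: "(p, q) \<in> set ps" for p q
  proof -
    have e1: "(p, q) \<in> E" "(q, p) \<in> E" using pq by (auto simp: E_def)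
    show ?thesis unfolding D_def using rtrancl_into_rtrancl[of v p E q] rtrancl_into_rtrancl[of v q E p] e1 by auto
  qed
  have "reachable ps (axis v 1) (axis w 1)" using ctrl unfolding controllable_on_sphere_def by simp
  then obtain T u x where T: "T \<ge> 0" and tr: "is_trajectory ps T u x" and x0: "x 0 = axis v 1" and xT: "x T = axis w 1"
    unfolding reachable_def by blast
  obtain S where S: "finite S" and cx: "continuous_on {0..T} x"
    and dx: "\<And>t. t \<in> {0<..<T} - S \<Longrightarrow> (x has_vector_derivative (sys_matrix ps (u t) *v x t)) (at t)"
    using tr unfolding is_trajectory_def by blast
  define f where "f t = (\<Sum>a\<in>D. (x t $ a)^2)" for t
  have df: "(f has_vector_derivative 0) (at t)" if t: "t \<in> {0<..<T} - S" for t
  proof -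
    define X where "X = sys_matrix ps (u t) *v x t"
    have comp: "((\<lambda>s. x s $ a) has_field_derivative X $ a) (at t)" for a
      using bounded_linear.has_vector_derivative[OF bounded_linear_vec_nth dx[OF t]]
      unfolding has_real_derivative_iff_has_vector_derivative X_def by simp
    have sq: "((\<lambda>s. (x s $ a)^2) has_field_derivative 2 * (x t $ a * X $ a)) (at t)" for a
      using DERIV_power[OF comp[of a], of 2] by (simp add: algebra_simps)
    have "(f has_field_derivative (\<Sum>a\<in>D. 2 * (x t $ a * X $ a))) (at t)"
      unfolding f_def by (rule DERIV_sum) (rule sq)
    moreover have "(\<Sum>a\<in>D. 2 * (x t $ a * X $ a)) = 2 * Qf D (x t) (sys_matrix ps (u t))"
      unfolding Qf_def X_def by (simp add: sum_distrib_left)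
    moreover have "Qf D (x t) (sys_matrix ps (u t)) = 0" by (rule Qf_sys[OF cl ne])
    ultimately show ?thesis unfolding has_real_derivative_iff_has_vector_derivative by simp
  qed
  have cf: "continuous_on {0..T} f"
    unfolding f_def by (intro continuous_intros continuous_on_component cx)
  have hi: "((\<lambda>t. 0) has_integral (f T - f 0)) {0..T}"
    by (rule fundamental_theorem_of_calculus_interior_strong[OF S T df cf])
  have eq: "f T = f 0" using has_integral_unique[OF hi has_integral_0] by simp
  have vD: "v \<notin> D" unfolding D_def by simp
  have wD: "w \<in> D" unfolding D_def using vw by simp
  have "f 0 = 0" unfolding f_def x0 using vD by (intro sum.neutral) (auto simp: axis_def)
  moreover have "f T = 1"
  proof -
    have "f T = (\<Sum>a\<in>D. if a = w then 1 else 0)" unfolding f_def xT by (rule sum.cong) (auto simp: axis_def)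
    then show ?thesis using wD by simp
  qed
  ultimately show False using eq by simp
qed


theorem proposition1:
  fixes ps :: "('n::finite \<times> 'n) list"
  assumes "CARD('n) \<ge> 2"
    and "ps \<noteq> []"
    and "\<forall>(i, j) \<in> set ps. i \<noteq> j"
  shows "controllable_on_sphere ps \<longleftrightarrow> graph_connected ps"
proof
  assume ctrl: "controllable_on_sphere ps"
  show "graph_connected ps"
  proof (rule ccontr)
    assume "\<not> graph_connected ps"
    then show False using not_conn[OF assms(2)] ctrl by blast
  qed
next
  assume conn: "graph_connected ps"
  define r where "r = fst (ps!0)"
  have R: "\<And>w. w \<noteq> r \<Longrightarrow> rot ps r w"
    using rot_path[OF assms(3)] conn unfolding graph_connected_def by blast
  show "controllable_on_sphere ps"
    unfolding controllable_on_sphere_def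
  proof (intro allI impI)
    fix x0 x1 :: "real^'n" assume n0: "norm x0 = 1" and n1: "norm x1 = 1"
    obtain M0 where M0: "good ps M0" "M0 x0 = axis r 1" using to_axis[OF R assms(1) n0] by blast
    obtain M1 where M1: "good ps M1" "M1 x1 = axis r 1" using to_axis[OF R assms(1) n1] by blast
    have a: "reachable ps x0 (axis r 1)" using M0 unfolding good_def by metis
    have b: "reachable ps (axis r 1) x1" using M1 unfolding good_def by metis
    show "reachable ps x0 x1" by (rule reach_trans[OF a b])
  qed
qed

end
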